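(* Let $\mathcal{G}$ be a graph with exactly two zealots, with opinions $-1$ and $1$, such that the persuadable subgraph $\mathcal{G}_{\mathcal{P}}$ is $d$-regular for some $d$ and every persuadable node is adjacent to both zealots. Consider the SBCM with parameters $\gamma,\delta\ge0$ and let $\bar{\mathbf{x}}$ be the harmonic state in which every persuadable node has opinion $0$. Let $u=\omega(0)=\frac{1}{1+e^{-\gamma\delta}}$ and $v=\omega(1)=\frac{1}{1+e^{\gamma-\gamma\delta}}$, and let $\mathbf{L}_{\mathcal{P}}$ be the combinatorial Laplacian of $\mathcal{G}_{\mathcal{P}}$. Then the space of unstable directions at $\bar{\mathbf{x}}$ is spanned by the eigenvectors $\mathbf{v}_i$ of $\mathbf{L}_{\mathcal{P}}$ whose eigenvalues $\lambda_i$ satisfy $$\lambda_i\le-\frac{2v\,(1-2\gamma(1-v))}{u}.$$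
   Context: Let $\mathcal{G}$ be a finite undirected unweighted graph without self-loops, adjacency $i\sim j$, with nodes partitioned into zealots $\mathcal{Z}$ and persuadable nodes $\mathcal{P}$; $\mathcal{G}_{\mathcal{P}}$ is the subgraph induced by $\mathcal{P}$, and its combinatorial Laplacian is $\mathbf{D}-\mathbf{A}$ (degree matrix minus adjacency matrix). With $w(x_i,x_j)=\omega(|x_i-x_j|)=\frac{1}{1+e^{\gamma(x_i-x_j)^2-\gamma\delta}}$ for $i\sim j$ and $0$ otherwise, the SBCM is $\frac{dx_i}{dt}=f_i(\mathbf{x})=\frac{\sum_j w(x_i,x_j)(x_j-x_i)}{\sum_j w(x_i,x_j)}$ for $i\in\mathcal{P}$ and $\frac{dx_i}{dt}=0$ for zealots; $\bar{\mathbf{x}}$ is a steady state. The space of unstable directions at a steady state is the span of the eigenvectors of $\mathbf{J}_{\mathcal{P}}=(\partial f_i/\partial x_j)_{i,j\in\mathcal{P}}$ (evaluated there) with nonnegative eigenvalues. *)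

theory Defs
  imports "HOL-Analysis.Analysis"
begin

text \<open>Z is the set of zealots, the persuadable nodes are the complement of Z.\<close>

definition simple_graph :: "('n \<Rightarrow> 'n \<Rightarrow> bool) \<Rightarrow> bool" where
  "simple_graph adj \<longleftrightarrow> (\<forall>i j. adj i j \<longleftrightarrow> adj j i) \<and> (\<forall>i. \<not> adj i i)"

definition omega :: "real \<Rightarrow> real \<Rightarrow> real \<Rightarrow> real" where
  "omega \<gamma> \<delta> r = 1 / (1 + exp (\<gamma> * r\<^sup>2 - \<gamma> * \<delta>))"

definition sbcm_w :: "('n \<Rightarrow> 'n \<Rightarrow> bool) \<Rightarrow> real \<Rightarrow> real \<Rightarrow> real^'n \<Rightarrow> 'n \<Rightarrow> 'n \<Rightarrow> real" where
  "sbcm_w adj \<gamma> \<delta> x i j = (if adj i j then omega \<gamma> \<delta> \<bar>x$i - x$j\<bar> else 0)"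

definition sbcm_f :: "('n::finite \<Rightarrow> 'n \<Rightarrow> bool) \<Rightarrow> 'n set \<Rightarrow> real \<Rightarrow> real \<Rightarrow> real^'n \<Rightarrow> 'n \<Rightarrow> real" where
  "sbcm_f adj Z \<gamma> \<delta> x i =
     (if i \<in> Z then 0
      else (\<Sum>j\<in>UNIV. sbcm_w adj \<gamma> \<delta> x i j * (x$j - x$i)) / (\<Sum>j\<in>UNIV. sbcm_w adj \<gamma> \<delta> x i j))"

text \<open>Partial derivative d f_i / d x_j at state x (entries of the Jacobian; J_P is its
  restriction to persuadable indices).\<close>
definition sbcm_jac :: "('n::finite \<Rightarrow> 'n \<Rightarrow> bool) \<Rightarrow> 'n set \<Rightarrow> real \<Rightarrow> real \<Rightarrow> real^'n \<Rightarrow> 'n \<Rightarrow> 'n \<Rightarrow> real" where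
  "sbcm_jac adj Z \<gamma> \<delta> x i j = deriv (\<lambda>t. sbcm_f adj Z \<gamma> \<delta> (x + t *\<^sub>R axis j 1) i) 0"

text \<open>v is an eigenvector, with (real) eigenvalue lam, of the matrix (M i j) restricted to
  the index set P; vectors over P are represented as vectors in real^'n vanishing off P.\<close>
definition is_eigvec_on :: "'n set \<Rightarrow> ('n \<Rightarrow> 'n \<Rightarrow> real) \<Rightarrow> real \<Rightarrow> real^'n \<Rightarrow> bool" where
  "is_eigvec_on P M lam v \<longleftrightarrow>
     v \<noteq> 0 \<and> (\<forall>i. i \<notin> P \<longrightarrow> v$i = 0) \<and>
     (\<forall>i\<in>P. (\<Sum>j\<in>P. M i j * v$j) = lam * v$i)"

definition unstable_space :: "('n::finite \<Rightarrow> 'n \<Rightarrow> bool) \<Rightarrow> 'n set \<Rightarrow> real \<Rightarrow> real \<Rightarrow> real^'n \<Rightarrow> (real^'n) set" where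
  "unstable_space adj Z \<gamma> \<delta> x =
     span {v. \<exists>lam. lam \<ge> 0 \<and> is_eigvec_on (- Z) (sbcm_jac adj Z \<gamma> \<delta> x) lam v}"

definition laplacian_on :: "('n \<Rightarrow> 'n \<Rightarrow> bool) \<Rightarrow> 'n set \<Rightarrow> 'n \<Rightarrow> 'n \<Rightarrow> real" where
  "laplacian_on adj P i j =
     (if i = j then real (card {k\<in>P. adj i k}) else if adj i j then -1 else 0)"

end

theory Submission
  imports Defs
begin
definition gg :: "real \<Rightarrow> real \<Rightarrow> real \<Rightarrow> real" where
  "gg \<gamma> \<delta> s = 1 / (1 + exp (\<gamma> * s - \<gamma> * \<delta>))"
definition gd :: "real \<Rightarrow> real \<Rightarrow> real \<Rightarrow> real" where
  "gd \<gamma> \<delta> s = - \<gamma> * exp (\<gamma> * s - \<gamma> * \<delta>) / (1 + exp (\<gamma> * s - \<gamma> * \<delta>))^2"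

lemma gg_deriv:
  "((\<lambda>t. gg \<gamma> \<delta> ((p + t * q)^2)) has_real_derivative gd \<gamma> \<delta> (p^2) * (2 * p * q)) (at 0)"
proof -
  have pos: "1 + exp (\<gamma> * p^2 - \<gamma> * \<delta>) \<noteq> 0" by (smt (verit) exp_gt_zero)
  have "((\<lambda>t. 1 / (1 + exp (\<gamma> * (p + t * q)^2 - \<gamma> * \<delta>))) has_real_derivative gd \<gamma> \<delta> (p^2) * (2 * p * q)) (at 0)"
    apply (rule derivative_eq_intros refl | simp add: pos)+
    apply (simp add: gd_def power2_eq_square field_simps)
    done
  then show ?thesis unfolding gg_def .
qed

lemma gd_v: "gd \<gamma> \<delta> 1 = - \<gamma> * gg \<gamma> \<delta> 1 * (1 - gg \<gamma> \<delta> 1)"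
proof -
  have pos: "1 + exp (\<gamma> - \<gamma> * \<delta>) \<noteq> 0" by (smt (verit) exp_gt_zero)
  show ?thesis unfolding gd_def gg_def using pos by (simp add: field_simps power2_eq_square)
qed

lemma sum_split2:
  fixes F :: "'n::finite \<Rightarrow> real"
  assumes "z1 \<noteq> z2"
  shows "sum F UNIV = F z1 + F z2 + sum F (- {z1, z2})"
proof -
  have "UNIV = insert z1 (insert z2 (- {z1, z2}))" by auto
  then have "sum F UNIV = sum F (insert z1 (insert z2 (- {z1, z2})))" by simp
  also have "\<dots> = F z1 + F z2 + sum F (- {z1, z2})" using assms by simp
  finally show ?thesis .
qed

lemma jac_formula:
  fixes adj :: "'n::finite \<Rightarrow> 'n \<Rightarrow> bool" and xbar :: "real^'n"
  assumes graph: "simple_graph adj"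
    and zealots: "z1 \<noteq> z2"
    and reg: "\<forall>i\<in>- {z1, z2}. card {k\<in>- {z1, z2}. adj i k} = d"
    and adjz: "\<forall>i\<in>- {z1, z2}. adj i z1 \<and> adj i z2"
    and xbar_def: "xbar = (\<chi> i. if i = z1 then -1 else if i = z2 then 1 else 0)"
    and i: "i \<in> - {z1, z2}" and j: "j \<in> - {z1, z2}"
  shows "sbcm_jac adj {z1, z2} \<gamma> \<delta> xbar i j =
     (if i = j then 4 * \<gamma> * gg \<gamma> \<delta> 1 * (1 - gg \<gamma> \<delta> 1) - 2 * gg \<gamma> \<delta> 1 - real d * gg \<gamma> \<delta> 0
      else if adj i j then gg \<gamma> \<delta> 0 else 0) / (2 * gg \<gamma> \<delta> 1 + real d * gg \<gamma> \<delta> 0)"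
proof -
  let ?P = "- {z1, z2}"
  define p where "p k = xbar$k - xbar$i" for k
  define q where "q k = (axis j (1::real) :: real^'n) $ k - (axis j (1::real) :: real^'n) $ i" for k
  define G where "G k t = (if adj i k then gg \<gamma> \<delta> ((p k + t * q k)^2) else 0)" for k t
  define G' where "G' k = (if adj i k then gd \<gamma> \<delta> ((p k)^2) * (2 * p k * q k) else 0)" for k
  have noadj: "\<not> adj i i" using graph unfolding simple_graph_def by auto
  have feq: "(\<lambda>t. sbcm_f adj {z1, z2} \<gamma> \<delta> (xbar + t *\<^sub>R axis j 1) i) =
     (\<lambda>t. (\<Sum>k\<in>UNIV. G k t * (p k + t * q k)) / (\<Sum>k\<in>UNIV. G k t))"
  proof
    fix t
    have e1: "(xbar + t *\<^sub>R axis j 1)$k - (xbar + t *\<^sub>R axis j 1)$i = p k + t * q k" for k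
      unfolding p_def q_def by (simp add: algebra_simps)
    have e2: "sbcm_w adj \<gamma> \<delta> (xbar + t *\<^sub>R axis j 1) i k = G k t" for k
    proof -
      have "\<bar>(xbar + t *\<^sub>R axis j 1)$i - (xbar + t *\<^sub>R axis j 1)$k\<bar>\<^sup>2 = (p k + t * q k)^2"
        using e1[of k] by (simp only: power2_abs, metis power2_commute)
      then show ?thesis unfolding sbcm_w_def G_def omega_def gg_def by simp
    qed
    show "sbcm_f adj {z1, z2} \<gamma> \<delta> (xbar + t *\<^sub>R axis j 1) i =
      (\<Sum>k\<in>UNIV. G k t * (p k + t * q k)) / (\<Sum>k\<in>UNIV. G k t)"
      using i unfolding sbcm_f_def e2 e1 by simp
  qed
  have dG: "(G k has_real_derivative G' k) (at 0)" for k
    unfolding G_def G'_def using gg_deriv[of \<gamma> \<delta> "p k" "q k"] by auto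
  have dN: "((\<lambda>t. \<Sum>k\<in>UNIV. G k t * (p k + t * q k)) has_real_derivative
            (\<Sum>k\<in>UNIV. G' k * p k + G k 0 * q k)) (at 0)"
  proof (rule DERIV_sum)
    fix k :: 'n
    have "((\<lambda>t. p k + t * q k) has_real_derivative q k) (at 0)"
      by (rule derivative_eq_intros refl | simp)+
    from DERIV_mult[OF dG[of k] this] show "((\<lambda>t. G k t * (p k + t * q k)) has_real_derivative G' k * p k + G k 0 * q k) (at 0)"
      by (simp add: mult.commute)
  qed
  have dD: "((\<lambda>t. \<Sum>k\<in>UNIV. G k t) has_real_derivative (\<Sum>k\<in>UNIV. G' k)) (at 0)"
    by (rule DERIV_sum) (rule dG)
  have pz1: "p z1 = -1" and pz2: "p z2 = 1" and pP: "k \<in> ?P \<Longrightarrow> p k = 0" for k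
    using zealots i unfolding p_def xbar_def by auto
  have qz1: "q z1 = - (if i = j then 1 else 0)" and qz2: "q z2 = - (if i = j then 1 else 0)"
    and qP: "q k = (if k = j then 1 else 0) - (if i = j then 1 else 0)" for k
    using j unfolding q_def by (auto simp: axis_def)
  have adjz1: "adj i z1" and adjz2: "adj i z2" using adjz i by auto
  have G0P: "k \<in> ?P \<Longrightarrow> G k 0 = (if adj i k then gg \<gamma> \<delta> 0 else 0)" for k
    unfolding G_def using pP by simp
  have sumP: "(\<Sum>k\<in>?P. (if adj i k then c else 0)) = c * real d" for c :: real
  proof -
    have "(\<Sum>k\<in>?P. (if adj i k then c else 0)) = (\<Sum>k\<in>{k\<in>?P. adj i k}. c)"
      by (simp add: sum.inter_filter[symmetric])
    also have "\<dots> = c * real d" using reg i by simp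
    finally show ?thesis .
  qed
  have D0: "(\<Sum>k\<in>UNIV. G k 0) = 2 * gg \<gamma> \<delta> 1 + real d * gg \<gamma> \<delta> 0"
  proof -
    have "(\<Sum>k\<in>?P. G k 0) = (\<Sum>k\<in>?P. (if adj i k then gg \<gamma> \<delta> 0 else 0))"
      using G0P by (rule sum.cong[OF refl])
    then show ?thesis
      unfolding sum_split2[OF zealots, of "\<lambda>k. G k 0"] using sumP adjz1 adjz2
      by (simp add: G_def pz1 pz2)
  qed
  have N0: "(\<Sum>k\<in>UNIV. G k 0 * (p k + 0 * q k)) = 0"
  proof -
    have "(\<Sum>k\<in>?P. G k 0 * (p k + 0 * q k)) = 0" using pP by simp
    then show ?thesis
      unfolding sum_split2[OF zealots, of "\<lambda>k. G k 0 * (p k + 0 * q k)"]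
      by (simp add: G_def pz1 pz2 adjz1 adjz2)
  qed
  have upos: "gg \<gamma> \<delta> 0 > 0" and vpos: "gg \<gamma> \<delta> 1 > 0"
    unfolding gg_def by (smt (verit) exp_gt_zero divide_pos_pos)+
  have Dpos: "2 * gg \<gamma> \<delta> 1 + real d * gg \<gamma> \<delta> 0 > 0"
    using upos vpos by (simp add: add_pos_nonneg)
  have N1: "(\<Sum>k\<in>UNIV. G' k * p k + G k 0 * q k) =
     (if i = j then 4 * \<gamma> * gg \<gamma> \<delta> 1 * (1 - gg \<gamma> \<delta> 1) - 2 * gg \<gamma> \<delta> 1 - real d * gg \<gamma> \<delta> 0
      else if adj i j then gg \<gamma> \<delta> 0 else 0)"
  proof -
    have sP: "(\<Sum>k\<in>?P. G' k * p k + G k 0 * q k) =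
        (\<Sum>k\<in>?P. (if adj i k then gg \<gamma> \<delta> 0 else 0) * ((if k = j then 1 else 0) - (if i = j then 1 else 0)))"
      by (rule sum.cong[OF refl]) (simp add: pP G0P qP G'_def)
    show ?thesis
    proof (cases "i = j")
      case True
      have "(\<Sum>k\<in>?P. G' k * p k + G k 0 * q k) = - (gg \<gamma> \<delta> 0 * real d)"
      proof -
        have "(\<Sum>k\<in>?P. (if adj i k then gg \<gamma> \<delta> 0 else 0) * ((if k = j then 1 else 0) - (if i = j then 1 else 0)))
          = (\<Sum>k\<in>?P. (if adj i k then - gg \<gamma> \<delta> 0 else 0))"
          by (rule sum.cong) (use True noadj in auto)
        then show ?thesis unfolding sP using sumP[of "- gg \<gamma> \<delta> 0"] by simp
      qed
      then show ?thesis
        unfolding sum_split2[OF zealots, of "\<lambda>k. G' k * p k + G k 0 * q k"]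
        using True adjz1 adjz2 by (simp add: G_def G'_def pz1 pz2 qz1 qz2 gd_v algebra_simps)
    next
      case False
      have "(\<Sum>k\<in>?P. G' k * p k + G k 0 * q k) = (if adj i j then gg \<gamma> \<delta> 0 else 0)"
      proof -
        have "(\<Sum>k\<in>?P. (if adj i k then gg \<gamma> \<delta> 0 else 0) * ((if k = j then 1 else 0) - (if i = j then 1 else 0)))
          = (\<Sum>k\<in>?P. (if k = j then (if adj i j then gg \<gamma> \<delta> 0 else 0) else 0))"
          by (rule sum.cong) (auto simp: False)
        then show ?thesis unfolding sP using j by simp
      qed
      then show ?thesis
        unfolding sum_split2[OF zealots, of "\<lambda>k. G' k * p k + G k 0 * q k"]
        using False by (simp add: G_def G'_def pz1 pz2 adjz1 adjz2 qz1 qz2)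
    qed
  qed
  have "((\<lambda>t. (\<Sum>k\<in>UNIV. G k t * (p k + t * q k)) / (\<Sum>k\<in>UNIV. G k t)) has_real_derivative
     ((\<Sum>k\<in>UNIV. G' k * p k + G k 0 * q k) * (\<Sum>k\<in>UNIV. G k 0) - (\<Sum>k\<in>UNIV. G k 0 * (p k + 0 * q k)) * (\<Sum>k\<in>UNIV. G' k))
       / ((\<Sum>k\<in>UNIV. G k 0) * (\<Sum>k\<in>UNIV. G k 0))) (at 0)"
    using DERIV_divide[OF dN dD] D0 Dpos by simp
  then have "((\<lambda>t. (\<Sum>k\<in>UNIV. G k t * (p k + t * q k)) / (\<Sum>k\<in>UNIV. G k t)) has_real_derivative
     (if i = j then 4 * \<gamma> * gg \<gamma> \<delta> 1 * (1 - gg \<gamma> \<delta> 1) - 2 * gg \<gamma> \<delta> 1 - real d * gg \<gamma> \<delta> 0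
      else if adj i j then gg \<gamma> \<delta> 0 else 0) / (2 * gg \<gamma> \<delta> 1 + real d * gg \<gamma> \<delta> 0)) (at 0)"
    unfolding N0 N1 D0 using Dpos by simp
  then show ?thesis unfolding sbcm_jac_def feq by (rule DERIV_imp_deriv)
qed

lemma sumlin:
  fixes w :: "real^'n::finite"
  assumes "i \<in> P" "\<not> adj i i"
  shows "(\<Sum>j\<in>P. (\<alpha> * (if i = j then 1 else 0) + \<beta> * (if adj i j then 1 else 0)) * w$j)
     = \<alpha> * w$i + \<beta> * (\<Sum>j\<in>P. if adj i j then w$j else 0)"
proof -
  have "(\<Sum>j\<in>P. (\<alpha> * (if i = j then 1 else 0) + \<beta> * (if adj i j then 1 else 0)) * w$j)
     = (\<Sum>j\<in>P. (if i = j then \<alpha> * w$j else 0) + \<beta> * (if adj i j then w$j else 0))"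
    by (rule sum.cong) (auto simp: algebra_simps)
  also have "\<dots> = (\<Sum>j\<in>P. (if i = j then \<alpha> * w$j else 0)) + \<beta> * (\<Sum>j\<in>P. if adj i j then w$j else 0)"
    by (simp add: sum.distrib sum_distrib_left)
  finally have "(\<Sum>j\<in>P. (\<alpha> * (if i = j then 1 else 0) + \<beta> * (if adj i j then 1 else 0)) * w$j)
     = (\<Sum>j\<in>P. (if i = j then \<alpha> * w$j else 0)) + \<beta> * (\<Sum>j\<in>P. if adj i j then w$j else 0)" .
  then show ?thesis using assms by simp
qed

theorem theorem7:
  fixes adj :: "'n::finite \<Rightarrow> 'n \<Rightarrow> bool" and z1 z2 :: 'n
    and \<gamma> \<delta> u v :: real and xbar :: "real^'n"
  assumes graph: "simple_graph adj"
    and zealots: "z1 \<noteq> z2"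
    and regular: "\<exists>d. \<forall>i\<in>- {z1, z2}. card {k\<in>- {z1, z2}. adj i k} = d"
    and adj_zealots: "\<forall>i\<in>- {z1, z2}. adj i z1 \<and> adj i z2"
    and params: "\<gamma> \<ge> 0" "\<delta> \<ge> 0"
    and xbar_def: "xbar = (\<chi> i. if i = z1 then -1 else if i = z2 then 1 else 0)"
    and u_def: "u = omega \<gamma> \<delta> 0"
    and v_def: "v = omega \<gamma> \<delta> 1"
  shows "unstable_space adj {z1, z2} \<gamma> \<delta> xbar =
         span {w. \<exists>lam. lam \<le> - (2 * v * (1 - 2 * \<gamma> * (1 - v))) / u
                     \<and> is_eigvec_on (- {z1, z2}) (laplacian_on adj (- {z1, z2})) lam w}"
proof -
  let ?P = "- {z1, z2}"
  obtain d where reg: "\<forall>i\<in>?P. card {k\<in>?P. adj i k} = d" using regular by blast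
  have u: "u = gg \<gamma> \<delta> 0" and v: "v = gg \<gamma> \<delta> 1"
    unfolding u_def v_def omega_def gg_def by simp_all
  have upos: "u > 0" and vpos: "v > 0"
    unfolding u v gg_def by (smt (verit) exp_gt_zero divide_pos_pos)+
  define D where "D = 2 * v + real d * u"
  have Dpos: "D > 0" unfolding D_def using upos vpos by (simp add: add_pos_nonneg)
  define aJ where "aJ = (4 * \<gamma> * v * (1 - v) - 2 * v - real d * u) / D"
  define bJ where "bJ = u / D"
  have noadj: "\<And>i. \<not> adj i i" using graph unfolding simple_graph_def by auto
  have J: "sbcm_jac adj {z1, z2} \<gamma> \<delta> xbar i j = aJ * (if i = j then 1 else 0) + bJ * (if adj i j then 1 else 0)"
    if "i \<in> ?P" "j \<in> ?P" for i j
    using jac_formula[OF graph zealots reg adj_zealots xbar_def that, of \<gamma> \<delta>] noadj[of i]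
    unfolding aJ_def bJ_def D_def u v by (auto simp: add_divide_distrib)
  have L: "laplacian_on adj ?P i j = real d * (if i = j then 1 else 0) + (-1) * (if adj i j then 1 else 0)"
    if "i \<in> ?P" for i j
    using reg that noadj[of i] unfolding laplacian_on_def by auto
  define A where "A w i = (\<Sum>j\<in>?P. if adj i j then w$j else 0)" for w :: "real^'n" and i
  have eJ: "is_eigvec_on ?P (sbcm_jac adj {z1, z2} \<gamma> \<delta> xbar) mu w \<longleftrightarrow>
     w \<noteq> 0 \<and> (\<forall>i. i \<notin> ?P \<longrightarrow> w$i = 0) \<and> (\<forall>i\<in>?P. aJ * w$i + bJ * A w i = mu * w$i)" for mu w
  proof -
    have "(\<Sum>j\<in>?P. sbcm_jac adj {z1, z2} \<gamma> \<delta> xbar i j * w$j) = aJ * w$i + bJ * A w i" if "i \<in> ?P" for i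
    proof -
      have "(\<Sum>j\<in>?P. sbcm_jac adj {z1, z2} \<gamma> \<delta> xbar i j * w$j) =
         (\<Sum>j\<in>?P. (aJ * (if i = j then 1 else 0) + bJ * (if adj i j then 1 else 0)) * w$j)"
        using J that by simp
      then show ?thesis using sumlin[where adj=adj, OF that noadj[of i]] unfolding A_def by simp
    qed
    then show ?thesis unfolding is_eigvec_on_def by auto
  qed
  have eL: "is_eigvec_on ?P (laplacian_on adj ?P) lam w \<longleftrightarrow>
     w \<noteq> 0 \<and> (\<forall>i. i \<notin> ?P \<longrightarrow> w$i = 0) \<and> (\<forall>i\<in>?P. real d * w$i + (-1) * A w i = lam * w$i)" for lam w
  proof -
    have "(\<Sum>j\<in>?P. laplacian_on adj ?P i j * w$j) = real d * w$i + (-1) * A w i" if "i \<in> ?P" for i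
    proof -
      have "(\<Sum>j\<in>?P. laplacian_on adj ?P i j * w$j) =
         (\<Sum>j\<in>?P. (real d * (if i = j then 1 else 0) + (-1) * (if adj i j then 1 else 0)) * w$j)"
        using L that by (intro sum.cong) auto
      then show ?thesis using sumlin[where adj=adj, OF that noadj[of i], of "real d" "-1" w] unfolding A_def by simp
    qed
    then show ?thesis unfolding is_eigvec_on_def by auto
  qed
  let ?c = "2 * v * (1 - 2 * \<gamma> * (1 - v))"
  have "{w. \<exists>lam. lam \<ge> 0 \<and> is_eigvec_on ?P (sbcm_jac adj {z1, z2} \<gamma> \<delta> xbar) lam w} =
        {w. \<exists>lam. lam \<le> - ?c / u \<and> is_eigvec_on ?P (laplacian_on adj ?P) lam w}"
  proof (intro set_eqI iffI; simp only: mem_Collect_eq)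
    fix w assume "\<exists>mu. mu \<ge> 0 \<and> is_eigvec_on ?P (sbcm_jac adj {z1, z2} \<gamma> \<delta> xbar) mu w"
    then obtain mu where mu: "mu \<ge> 0" and ev: "is_eigvec_on ?P (sbcm_jac adj {z1, z2} \<gamma> \<delta> xbar) mu w" by blast
    define lam where "lam = real d - (mu - aJ) / bJ"
    have "real d * w$i + (-1) * A w i = lam * w$i" if "i \<in> ?P" for i
    proof -
      have "aJ * w$i + bJ * A w i = mu * w$i" using ev that unfolding eJ by blast
      then have "A w i = (mu - aJ) / bJ * w$i" using upos Dpos unfolding bJ_def
        by (simp add: field_simps)
      then show ?thesis unfolding lam_def by (simp add: algebra_simps add_divide_distrib[symmetric])
    qed
    then have "is_eigvec_on ?P (laplacian_on adj ?P) lam w" using ev unfolding eJ eL by blast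
    moreover have "lam \<le> - ?c / u"
    proof -
      have h: "(mu - aJ) / bJ = (mu * D - (4 * \<gamma> * v * (1 - v) - 2 * v - real d * u)) / u"
        unfolding aJ_def bJ_def using upos Dpos by (simp add: field_simps)
      have "lam = (- mu * D + 4 * \<gamma> * v * (1 - v) - 2 * v) / u"
        unfolding lam_def h using upos by (simp add: field_simps)
      also have "\<dots> \<le> (4 * \<gamma> * v * (1 - v) - 2 * v) / u"
        using mu Dpos upos by (intro divide_right_mono) (auto simp: mult_nonneg_nonneg)
      also have "\<dots> = - ?c / u" by (simp add: algebra_simps)
      finally show ?thesis .
    qed
    ultimately show "\<exists>lam. lam \<le> - ?c / u \<and> is_eigvec_on ?P (laplacian_on adj ?P) lam w" by blast
  next
    fix w assume "\<exists>lam. lam \<le> - ?c / u \<and> is_eigvec_on ?P (laplacian_on adj ?P) lam w"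
    then obtain lam where lam: "lam \<le> - ?c / u" and ev: "is_eigvec_on ?P (laplacian_on adj ?P) lam w" by blast
    define mu where "mu = aJ + bJ * (real d - lam)"
    have "aJ * w$i + bJ * A w i = mu * w$i" if "i \<in> ?P" for i
    proof -
      have "real d * w$i + (-1) * A w i = lam * w$i" using ev that unfolding eL by blast
      then have "A w i = (real d - lam) * w$i" by (simp add: algebra_simps)
      then have "aJ * w$i + bJ * A w i = aJ * w$i + bJ * ((real d - lam) * w$i)" by simp
      then show ?thesis unfolding mu_def by (simp add: algebra_simps)
    qed
    then have "is_eigvec_on ?P (sbcm_jac adj {z1, z2} \<gamma> \<delta> xbar) mu w" using ev unfolding eJ eL by blast
    moreover have "mu \<ge> 0"
    proof -
      have "u * lam \<le> u * (- ?c / u)" using lam upos by (intro mult_left_mono) auto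
      then have "u * lam \<le> - ?c" using upos by simp
      then have "0 \<le> 4 * \<gamma> * v * (1 - v) - 2 * v - u * lam" by (simp add: algebra_simps)
      moreover have "mu = (4 * \<gamma> * v * (1 - v) - 2 * v - u * lam) / D"
      proof -
        have "mu = ((4 * \<gamma> * v * (1 - v) - 2 * v - real d * u) + u * (real d - lam)) / D"
          unfolding mu_def aJ_def bJ_def by (simp add: add_divide_distrib)
        also have "(4 * \<gamma> * v * (1 - v) - 2 * v - real d * u) + u * (real d - lam) = 4 * \<gamma> * v * (1 - v) - 2 * v - u * lam"
          by (simp add: algebra_simps)
        finally show ?thesis .
      qed
      ultimately show ?thesis using Dpos by simp
    qed
    ultimately show "\<exists>mu. mu \<ge> 0 \<and> is_eigvec_on ?P (sbcm_jac adj {z1, z2} \<gamma> \<delta> xbar) mu w" by blast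
  qed
  then show ?thesis unfolding unstable_space_def by simp
qed

end
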